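(* Let $\beta\in(0,2)$, $v\in C([0,1],L(\mathbb{R}^d,\mathbb{R}^n))$ and $w\in\mathcal{C}^\beta(\mathbb{R}^d)$. Then the series $\pi_<(v,w):=\sum_{p=0}^\infty S_{p-1}v\,\Delta_pw$ converges uniformly, $\pi_<(v,w)\in\mathcal{C}^\beta(\mathbb{R}^n)$, and $\|\pi_<(v,w)\|_\beta\lesssim\|v\|_\infty\|w\|_\beta$.
   Context: Index set: pairs $(p,m)$ with either $p=-1,m=0$, or $p\in\mathbb{N}=\{0,1,2,\dots\}$ and $0\le m\le 2^p$. For $p\in\mathbb{N}$, $1\le m\le 2^p$ set $t^0_{pm}=(m-1)2^{-p}$, $t^1_{pm}=(2m-1)2^{-p-1}$, $t^2_{pm}=m2^{-p}$. Rescaled Haar functions: for $p\in\mathbb{N}$, $1\le m\le 2^p$, $\chi_{pm}=2^p$ on $[t^0_{pm},t^1_{pm})$, $=-2^p$ on $[t^1_{pm},t^2_{pm})$, $=0$ elsewhere; $\chi_{00}\equiv1$; $\chi_{p0}\equiv0$ for $p\ge1$. Rescaled Schauder functions: $\varphi_{pm}(t)=\int_0^t\chi_{pm}(s)\,ds$ for $p\in\mathbb{N}$, and $\varphi_{-10}\equiv1$. For continuous $f:[0,1]\to E$ ($E$ a finite-dimensional normed space), coefficients: $f_{-10}=f(0)$, $f_{00}=f(1)-f(0)$, $f_{p0}=0$ for $p\ge1$, $f_{pm}=2f(t^1_{pm})-f(t^0_{pm})-f(t^2_{pm})$ for $p\in\mathbb{N},m\ge1$. Schauder blocks: $\Delta_pf=\sum_{m=0}^{2^p}f_{pm}\varphi_{pm}$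 ($p\ge-1$), $S_pf=\sum_{q=-1}^p\Delta_qf$ (so $S_{-1}f\equiv f(0)$ and $S_pf$ is the piecewise linear interpolation of $f$ at the points $k2^{-p-1}$). For $\alpha>0$, $\|f\|_\alpha:=\sup_{p,m}2^{p\alpha}|f_{pm}|$ and $\mathcal{C}^\alpha(E):=\{f\in C([0,1],E):\|f\|_\alpha<\infty\}$. $\|\cdot\|_\infty$ is the sup norm; $\lesssim$ hides a constant independent of the functions. *)

theory Defs
  imports "HOL-Analysis.Analysis"
begin

text \<open>Dyadic points, indexed by p \<in> nat and 1 \<le> m \<le> 2^p.\<close>
definition tt0 :: "nat \<Rightarrow> nat \<Rightarrow> real" where
  "tt0 p m = (real m - 1) / 2 ^ p"
definition tt1 :: "nat \<Rightarrow> nat \<Rightarrow> real" where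
  "tt1 p m = (2 * real m - 1) / 2 ^ (p + 1)"
definition tt2 :: "nat \<Rightarrow> nat \<Rightarrow> real" where
  "tt2 p m = real m / 2 ^ p"

definition haar :: "nat \<Rightarrow> nat \<Rightarrow> real \<Rightarrow> real" where
  "haar p m t =
     (if p = 0 \<and> m = 0 then 1
      else if 1 \<le> m \<and> m \<le> 2 ^ p then
        (if tt0 p m \<le> t \<and> t < tt1 p m then 2 ^ p
         else if tt1 p m \<le> t \<and> t < tt2 p m then - (2 ^ p) else 0)
      else 0)"

definition schauder :: "int \<Rightarrow> nat \<Rightarrow> real \<Rightarrow> real" where
  "schauder p m t = (if p = -1 then 1 else integral {0..t} (haar (nat p) m))"

definition schauder_idx :: "(int \<times> nat) set" where
  "schauder_idx = {(-1, 0)} \<union> {(int p, m) | p m. m \<le> 2 ^ p}"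

definition scoef :: "(real \<Rightarrow> 'a::real_normed_vector) \<Rightarrow> int \<Rightarrow> nat \<Rightarrow> 'a" where
  "scoef f p m =
     (if p = -1 \<and> m = 0 then f 0
      else if p = 0 \<and> m = 0 then f 1 - f 0
      else if 0 \<le> p \<and> 1 \<le> m \<and> m \<le> 2 ^ nat p then
        2 *\<^sub>R f (tt1 (nat p) m) - f (tt0 (nat p) m) - f (tt2 (nat p) m)
      else 0)"

definition sDelta :: "(real \<Rightarrow> 'a::real_normed_vector) \<Rightarrow> int \<Rightarrow> real \<Rightarrow> 'a" where
  "sDelta f p t = (\<Sum>m\<in>{0..2 ^ nat p}. schauder p m t *\<^sub>R scoef f p m)"

definition sS :: "(real \<Rightarrow> 'a::real_normed_vector) \<Rightarrow> int \<Rightarrow> real \<Rightarrow> 'a" where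
  "sS f p t = (\<Sum>q\<in>{-1..p}. sDelta f q t)"

definition holder_norm :: "real \<Rightarrow> (real \<Rightarrow> 'a::real_normed_vector) \<Rightarrow> real" where
  "holder_norm \<alpha> f = (SUP pm\<in>schauder_idx. 2 powr (real_of_int (fst pm) * \<alpha>) * norm (scoef f (fst pm) (snd pm)))"

definition holder_space :: "real \<Rightarrow> (real \<Rightarrow> 'a::real_normed_vector) set" where
  "holder_space \<alpha> = {f. continuous_on {0..1} f \<and>
     bdd_above ((\<lambda>pm. 2 powr (real_of_int (fst pm) * \<alpha>) * norm (scoef f (fst pm) (snd pm))) ` schauder_idx)}"

definition sup_norm :: "(real \<Rightarrow> 'a::real_normed_vector) \<Rightarrow> real" where
  "sup_norm f = (SUP t\<in>{0..1}. norm (f t))"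

definition para_term :: "(real \<Rightarrow> ('a::real_normed_vector \<Rightarrow>\<^sub>L 'b::real_normed_vector)) \<Rightarrow> (real \<Rightarrow> 'a) \<Rightarrow> nat \<Rightarrow> real \<Rightarrow> 'b" where
  "para_term v w p t = blinfun_apply (sS v (int p - 1) t) (sDelta w (int p) t)"

definition para :: "(real \<Rightarrow> ('a::real_normed_vector \<Rightarrow>\<^sub>L 'b::real_normed_vector)) \<Rightarrow> (real \<Rightarrow> 'a) \<Rightarrow> real \<Rightarrow> 'b" where
  "para v w t = (\<Sum>p. para_term v w p t)"

end

theory Submission
  imports Defs
begin


definition Tf :: "real \<Rightarrow> real \<Rightarrow> real" where
  "Tf a s = max 0 (1 - \<bar>s - a\<bar>)"

lemma Tf_cell:
  fixes ia ik :: int and x z :: real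
  assumes "of_int ik \<le> x" "x \<le> of_int ik + 1"
  shows "Tf (of_int ia) x = (if ia = ik then 1 - (x - ia) else if ia = ik+1 then 1 - (ia - x) else 0)"
proof -
  consider "ia \<le> ik - 1" | "ia = ik" | "ia = ik + 1" | "ia \<ge> ik + 2" by linarith
  then show ?thesis
  proof cases
    case 1
    then have "real_of_int ia \<le> of_int ik - 1" by linarith
    then show ?thesis using assms 1 by (auto simp: Tf_def)
  next
    case 4
    then have "real_of_int ia \<ge> of_int ik + 2" by linarith
    then show ?thesis using assms 4 by (auto simp: Tf_def)
  qed (use assms in \<open>auto simp: Tf_def\<close>)
qed

lemma Tf_mid:
  fixes ia ik :: int and x z :: real
  assumes "of_int ik \<le> x" "x \<le> of_int ik + 1" "of_int ik \<le> z" "z \<le> of_int ik + 1"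
  shows "Tf (of_int ia) x + Tf (of_int ia) z = 2 * Tf (of_int ia) ((x + z) / 2)"
proof -
  have "of_int ik \<le> (x+z)/2" "(x+z)/2 \<le> of_int ik + 1" using assms by auto
  then show ?thesis using Tf_cell[OF assms(1,2), of ia] Tf_cell[OF assms(3,4), of ia]
     Tf_cell[of ik "(x+z)/2" ia] by (auto simp: field_simps)
qed

lemma Tf_lip:
  fixes ia ik :: int and x z :: real
  assumes "of_int ik \<le> x" "x \<le> of_int ik + 1" "of_int ik \<le> z" "z \<le> of_int ik + 1"
  shows "\<bar>Tf (of_int ia) x - Tf (of_int ia) z\<bar> \<le> (if ia = ik \<or> ia = ik + 1 then \<bar>x - z\<bar> else 0)"
  using Tf_cell[OF assms(1,2), of ia] Tf_cell[OF assms(3,4), of ia] by auto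

lemma Tf_bnd:
  fixes ia ik :: int and x z :: real
  assumes "of_int ik \<le> x" "x \<le> of_int ik + 1"
  shows "\<bar>Tf (of_int ia) x\<bar> \<le> (if ia = ik \<or> ia = ik + 1 then 1 else 0)"
  using Tf_cell[OF assms(1,2), of ia] assms by auto

lemma Tf_int:
  fixes ia ik :: int and x z :: real
  shows "Tf (of_int ia) (of_int ik) = (if ia = ik then 1 else 0)"
  using Tf_cell[of ik "of_int ik" ia] by auto

lemma lin_vderiv:
  assumes "open S" "x \<in> S" "\<And>z. z \<in> S \<Longrightarrow> f z = c * z + d"
  shows "(f has_vector_derivative c) (at x)"
proof -
  have "((\<lambda>z. c * z + d) has_field_derivative c) (at x)"
    by (auto intro!: derivative_eq_intros)
  then have "(f has_field_derivative c) (at x)"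
    by (rule has_field_derivative_transform_within_open[OF _ assms(1,2)]) (simp add: assms(3))
  then show ?thesis by (simp add: has_real_derivative_iff_has_vector_derivative)
qed

lemma schauder_hat:
  assumes m: "1 \<le> m" "m \<le> 2^q" and t: "0 \<le> t"
  shows "schauder (int q) m t = Tf (2*real m - 1) (2^(q+1)*t) / 2"
proof -
  define P :: real where "P = 2^q"
  have P: "P > 0" by (simp add: P_def)
  define H where "H = (\<lambda>z. Tf (2*real m - 1) (2*(P*z)) / 2)"
  have H0: "H 0 = 0" using m by (simp add: H_def Tf_def)
  have cont: "continuous_on {0..t} H" unfolding H_def Tf_def by (intro continuous_intros) auto
  have tt: "tt0 q m = (real m - 1)/P" "tt1 q m = (real m - 1/2)/P" "tt2 q m = real m/P"
    by (auto simp: tt0_def tt1_def tt2_def P_def field_simps)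
  have hv: "haar q m x = (if tt0 q m \<le> x \<and> x < tt1 q m then P
         else if tt1 q m \<le> x \<and> x < tt2 q m then - P else 0)" for x
    using m by (simp add: haar_def P_def)
  have der: "(H has_vector_derivative haar q m x) (at x)"
    if x: "x \<in> {0..t} - {tt0 q m, tt1 q m, tt2 q m}" for x
  proof -
    have lt: "(a/P < b) \<longleftrightarrow> a < P * b" "(b < a/P) \<longleftrightarrow> P * b < a"
       "(a/P \<le> b) \<longleftrightarrow> a \<le> P * b" "(b \<le> a/P) \<longleftrightarrow> P * b \<le> a" for a b
      using P by (auto simp: field_simps)
    have ne: "P * x \<noteq> real m - 1" "P * x \<noteq> real m - 1/2" "P * x \<noteq> real m"
      using x P by (auto simp: tt field_simps)
    consider "P * x < real m - 1" | "real m - 1 < P * x \<and> P * x < real m - 1/2"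
      | "real m - 1/2 < P * x \<and> P * x < real m" | "real m < P * x"
      using ne by linarith
    then show ?thesis
    proof cases
      case 1
      have "haar q m x = 0" using 1 by (auto simp: hv tt lt)
      moreover have "(H has_vector_derivative 0) (at x)"
      proof (rule lin_vderiv[of "{..<tt0 q m}" _ _ _ 0])
        fix z assume "z \<in> {..<tt0 q m}"
        then have "P * z < real m - 1" by (auto simp: tt lt)
        then show "H z = 0 * z + 0" by (auto simp: H_def Tf_def)
      qed (use 1 in \<open>auto simp: tt lt\<close>)
      ultimately show ?thesis by simp
    next
      case 2
      have "haar q m x = P" using 2 by (auto simp: hv tt lt)
      moreover have "(H has_vector_derivative P) (at x)"
      proof (rule lin_vderiv[of "{tt0 q m<..<tt1 q m}" _ _ _ "1 - real m"])
        fix z assume "z \<in> {tt0 q m<..<tt1 q m}"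
        then have "real m - 1 < P * z" "P * z < real m - 1/2" by (auto simp: tt lt)
        then show "H z = P * z + (1 - real m)" by (auto simp: H_def Tf_def)
      qed (use 2 in \<open>auto simp: tt lt\<close>)
      ultimately show ?thesis by simp
    next
      case 3
      have "haar q m x = -P" using 3 by (auto simp: hv tt lt)
      moreover have "(H has_vector_derivative -P) (at x)"
      proof (rule lin_vderiv[of "{tt1 q m<..<tt2 q m}" _ _ _ "real m"])
        fix z assume "z \<in> {tt1 q m<..<tt2 q m}"
        then have "real m - 1/2 < P * z" "P * z < real m" by (auto simp: tt lt)
        then show "H z = -P * z + real m" by (auto simp: H_def Tf_def)
      qed (use 3 in \<open>auto simp: tt lt\<close>)
      ultimately show ?thesis by simp
    next
      case 4
      have "haar q m x = 0" using 4 by (auto simp: hv tt lt)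
      moreover have "(H has_vector_derivative 0) (at x)"
      proof (rule lin_vderiv[of "{tt2 q m<..}" _ _ _ 0])
        fix z assume "z \<in> {tt2 q m<..}"
        then have "P * z > real m" by (auto simp: tt lt)
        then show "H z = 0 * z + 0" by (auto simp: H_def Tf_def)
      qed (use 4 in \<open>auto simp: tt lt\<close>)
      ultimately show ?thesis by simp
    qed
  qed
  have "(haar q m has_integral (H t - H 0)) {0..t}"
    by (rule fundamental_theorem_of_calculus_strong[of "{tt0 q m, tt1 q m, tt2 q m}"])
       (use t cont der in auto)
  then have "integral {0..t} (haar q m) = H t" using H0 by (simp add: integral_unique)
  then show ?thesis by (simp add: schauder_def H_def P_def mult.assoc)
qed

lemma schauder_00: assumes "0 \<le> t" shows "schauder 0 0 t = t"
proof -
  have "haar 0 0 = (\<lambda>_. 1)" by (auto simp: haar_def)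
  then show ?thesis using assms by (simp add: schauder_def)
qed

lemma schauder_q0: assumes "q > 0" shows "schauder (int q) 0 t = 0"
proof -
  have "haar q 0 = (\<lambda>_. 0)" using assms by (auto simp: haar_def)
  then show ?thesis using assms by (simp add: schauder_def)
qed

definition hs :: "(real \<Rightarrow> 'a::real_normed_vector) \<Rightarrow> nat \<Rightarrow> real \<Rightarrow> 'a" where
  "hs f q s = (\<Sum>m\<in>{1..2^q}. Tf (2*real m - 1) s *\<^sub>R scoef f (int q) m)"

lemma odd_real: "2 * real m - 1 = real_of_int (2 * int m - 1)" by simp

lemma count_le:
  fixes c :: real and ik :: int
  assumes "c \<ge> 0"
  shows "(\<Sum>m\<in>{1..(2::nat)^q}. (if 2 * int m - 1 = ik \<or> 2 * int m - 1 = ik + 1 then c else 0)) \<le> c"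
proof -
  have "(\<Sum>m\<in>{1..(2::nat)^q}. (if 2 * int m - 1 = ik \<or> 2 * int m - 1 = ik + 1 then c else 0))
      \<le> (\<Sum>m\<in>{1..(2::nat)^q}. (if m = nat (ik div 2) + 1 then c else 0))"
  proof (rule sum_mono)
    fix m :: nat assume m1: "m \<in> {1..2^q}"
    have "2 * int m - 1 = ik \<or> 2 * int m - 1 = ik + 1 \<Longrightarrow> int m = ik div 2 + 1" by presburger
    then have imp: "2 * int m - 1 = ik \<or> 2 * int m - 1 = ik + 1 \<Longrightarrow> m = nat (ik div 2) + 1" using m1 by auto
    show "(if 2 * int m - 1 = ik \<or> 2 * int m - 1 = ik + 1 then c else 0) \<le> (if m = nat (ik div 2) + 1 then c else 0)"
    proof (cases "2 * int m - 1 = ik \<or> 2 * int m - 1 = ik + 1")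
      case True
      then have "m = nat (ik div 2) + 1" by (rule imp)
      then show ?thesis using True by simp
    next
      case False
      then show ?thesis using assms by simp
    qed
  qed
  also have "\<dots> \<le> c" using assms by (simp add: sum.delta)
  finally show ?thesis .
qed

lemma hs_mid:
  fixes ik :: int
  assumes "of_int ik \<le> x" "x \<le> of_int ik + 1" "of_int ik \<le> z" "z \<le> of_int ik + 1"
  shows "hs f q x + hs f q z = 2 *\<^sub>R hs f q ((x + z) / 2)"
proof -
  have "hs f q x + hs f q z = (\<Sum>m\<in>{1..2^q}. (Tf (2*real m - 1) x + Tf (2*real m - 1) z) *\<^sub>R scoef f (int q) m)"
    by (simp add: hs_def sum.distrib scaleR_left_distrib)
  also have "\<dots> = (\<Sum>m\<in>{1..2^q}. (2 * Tf (2*real m - 1) ((x+z)/2)) *\<^sub>R scoef f (int q) m)"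
    by (rule sum.cong[OF refl]) (simp only: odd_real Tf_mid[OF assms])
  also have "\<dots> = 2 *\<^sub>R hs f q ((x + z) / 2)"
    by (simp add: hs_def scaleR_sum_right)
  finally show ?thesis .
qed

lemma hs_lip:
  fixes ik :: int
  assumes "of_int ik \<le> x" "x \<le> of_int ik + 1" "of_int ik \<le> z" "z \<le> of_int ik + 1"
    and K: "\<And>m. 1 \<le> m \<Longrightarrow> m \<le> 2^q \<Longrightarrow> norm (scoef f (int q) m) \<le> K"
  shows "norm (hs f q x - hs f q z) \<le> \<bar>x - z\<bar> * K"
proof -
  have K0: "K \<ge> 0" using order_trans[OF norm_ge_zero K[of 1]] by simp
  have eq: "hs f q x - hs f q z = (\<Sum>m\<in>{1..2^q}. (Tf (2*real m - 1) x - Tf (2*real m - 1) z) *\<^sub>R scoef f (int q) m)"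
    by (simp add: hs_def sum_subtractf scaleR_diff_left)
  have "norm (hs f q x - hs f q z) \<le> (\<Sum>m\<in>{1..2^q}. \<bar>Tf (2*real m - 1) x - Tf (2*real m - 1) z\<bar> * norm (scoef f (int q) m))"
    unfolding eq by (rule order_trans[OF norm_sum], simp)
  also have "\<dots> \<le> (\<Sum>m\<in>{1..(2::nat)^q}. (if 2 * int m - 1 = ik \<or> 2 * int m - 1 = ik + 1 then \<bar>x - z\<bar> * K else 0))"
  proof (rule sum_mono)
    fix m assume m: "m \<in> {1..(2::nat)^q}"
    have Km: "norm (scoef f (int q) m) \<le> K" using m K by auto
    have a: "\<bar>Tf (2*real m - 1) x - Tf (2*real m - 1) z\<bar> \<le> (if 2 * int m - 1 = ik \<or> 2 * int m - 1 = ik + 1 then \<bar>x - z\<bar> else 0)"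
      unfolding odd_real by (rule Tf_lip[OF assms(1-4)])
    show "\<bar>Tf (2*real m - 1) x - Tf (2*real m - 1) z\<bar> * norm (scoef f (int q) m) \<le> (if 2 * int m - 1 = ik \<or> 2 * int m - 1 = ik + 1 then \<bar>x - z\<bar> * K else 0)"
      using mult_mono[OF a Km _ norm_ge_zero] K0 by (auto split: if_splits)
  qed
  also have "\<dots> \<le> \<bar>x - z\<bar> * K" by (rule count_le) (use K0 in simp)
  finally show ?thesis .
qed

lemma hs_bnd:
  fixes ik :: int
  assumes "of_int ik \<le> x" "x \<le> of_int ik + 1"
    and K: "\<And>m. 1 \<le> m \<Longrightarrow> m \<le> 2^q \<Longrightarrow> norm (scoef f (int q) m) \<le> K"
  shows "norm (hs f q x) \<le> K"
proof -
  have K0: "K \<ge> 0" using order_trans[OF norm_ge_zero K[of 1]] by simp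
  have "norm (hs f q x) \<le> (\<Sum>m\<in>{1..2^q}. \<bar>Tf (2*real m - 1) x\<bar> * norm (scoef f (int q) m))"
    unfolding hs_def by (rule order_trans[OF norm_sum], simp)
  also have "\<dots> \<le> (\<Sum>m\<in>{1..(2::nat)^q}. (if 2 * int m - 1 = ik \<or> 2 * int m - 1 = ik + 1 then K else 0))"
  proof (rule sum_mono)
    fix m assume m: "m \<in> {1..(2::nat)^q}"
    have Km: "norm (scoef f (int q) m) \<le> K" using m K by auto
    have a: "\<bar>Tf (2*real m - 1) x\<bar> \<le> (if 2 * int m - 1 = ik \<or> 2 * int m - 1 = ik + 1 then 1 else 0)"
      unfolding odd_real by (rule Tf_bnd[OF assms(1-2)])
    show "\<bar>Tf (2*real m - 1) x\<bar> * norm (scoef f (int q) m) \<le> (if 2 * int m - 1 = ik \<or> 2 * int m - 1 = ik + 1 then K else 0)"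
      using mult_mono[OF a Km _ norm_ge_zero] K0 by (auto split: if_splits)
  qed
  also have "\<dots> \<le> K" by (rule count_le) (use K0 in simp)
  finally show ?thesis .
qed

lemma hs_int:
  fixes ik :: int
  shows "hs f q (of_int ik) = (\<Sum>m\<in>{1..2^q}. (if 2 * int m - 1 = ik then scoef f (int q) m else 0))"
  unfolding hs_def odd_real Tf_int by (rule sum.cong) auto

lemma hs_even:
  fixes i :: int
  shows "hs f q (2 * of_int i) = 0"
proof -
  have ne: "2 * int m - 1 \<noteq> 2 * i" for m :: nat by presburger
  have "hs f q (of_int (2*i)) = 0" unfolding hs_int by (rule sum.neutral) (simp add: ne)
  then show ?thesis by simp
qed

lemma hs_odd:
  assumes "1 \<le> m0" "m0 \<le> 2^q"
  shows "hs f q (2 * real m0 - 1) = scoef f (int q) m0"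
proof -
  have "hs f q (of_int (2 * int m0 - 1)) = scoef f (int q) m0" unfolding hs_int
    using assms by (simp add: sum.delta)
  then show ?thesis by (simp only: odd_real)
qed

lemma haar_big: "2^q < m \<Longrightarrow> haar q m = (\<lambda>_. 0)"
  by (auto simp: haar_def)

lemma schauder_big: "2^q < m \<Longrightarrow> schauder (int q) m t = 0"
  by (simp add: schauder_def haar_big)

lemma sDelta_m1: "sDelta f (-1) t = f 0"
proof -
  have "{0..1::nat} = {0,1}" by auto
  then show ?thesis by (simp add: sDelta_def schauder_def scoef_def)
qed

lemma sDelta_nat:
  assumes "0 \<le> t"
  shows "sDelta f (int q) t = (if q = 0 then t else 0) *\<^sub>R (f 1 - f 0) + (1/2) *\<^sub>R hs f q (2^(q+1)*t)"
proof -
  have S: "{0..(2::nat)^q} = insert 0 {1..2^q}" by auto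
  have h0: "(\<Sum>m\<in>{1..2^q}. schauder (int q) m t *\<^sub>R scoef f (int q) m) =
     (\<Sum>m\<in>{1..2^q}. (1/2) *\<^sub>R (Tf (2*real m - 1) (2^(q+1)*t) *\<^sub>R scoef f (int q) m))"
    by (rule sum.cong) (use assms in \<open>auto simp: schauder_hat\<close>)
  have h: "(\<Sum>m\<in>{1..2^q}. schauder (int q) m t *\<^sub>R scoef f (int q) m) = (1/2) *\<^sub>R hs f q (2^(q+1)*t)"
    unfolding h0 hs_def scaleR_sum_right ..
  have z: "schauder (int q) 0 t *\<^sub>R scoef f (int q) 0 = (if q = 0 then t else 0) *\<^sub>R (f 1 - f 0)"
    using assms by (cases "q = 0") (auto simp: schauder_00 schauder_q0 scoef_def)
  have "sDelta f (int q) t = schauder (int q) 0 t *\<^sub>R scoef f (int q) 0 + (\<Sum>m\<in>{1..2^q}. schauder (int q) m t *\<^sub>R scoef f (int q) m)"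
    unfolding sDelta_def nat_int S by (subst sum.insert) auto
  then show ?thesis by (simp only: h z)
qed

lemma mid_comb:
  fixes d h0 h1 h2 :: "'a::real_normed_vector"
  assumes "a + c = 2*b" "h0 + h2 = 2 *\<^sub>R h1"
  shows "(a *\<^sub>R d + (1/2) *\<^sub>R h0) + (c *\<^sub>R d + (1/2) *\<^sub>R h2) = 2 *\<^sub>R (b *\<^sub>R d + (1/2) *\<^sub>R h1)"
proof -
  have "(a *\<^sub>R d + (1/2) *\<^sub>R h0) + (c *\<^sub>R d + (1/2) *\<^sub>R h2) = (a + c) *\<^sub>R d + (1/2) *\<^sub>R (h0 + h2)"
    by (simp add: algebra_simps)
  also have "\<dots> = 2 *\<^sub>R (b *\<^sub>R d + (1/2) *\<^sub>R h1)" using assms by (simp add: algebra_simps)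
  finally show ?thesis .
qed

lemma tt_nonneg: "1 \<le> m \<Longrightarrow> 0 \<le> tt0 j m" "1 \<le> m \<Longrightarrow> 0 \<le> tt1 j m" "0 \<le> tt2 j m"
  by (auto simp: tt0_def tt1_def tt2_def)

lemma tt_le1: "m \<le> 2^j \<Longrightarrow> tt2 j m \<le> 1" "m \<le> 2^j \<Longrightarrow> tt1 j m \<le> 1" "m \<le> 2^j \<Longrightarrow> tt0 j m \<le> 1"
proof -
  assume m: "m \<le> 2^j"
  then have "real m \<le> 2^j" by (metis of_nat_le_iff of_nat_numeral of_nat_power)
  have p: "(0::real) < 2^j" by simp
  show "tt2 j m \<le> 1" using \<open>real m \<le> 2^j\<close> p by (simp add: tt2_def divide_le_eq)
  have "2 * real m - 1 \<le> 2 * 2^j" using \<open>real m \<le> 2^j\<close> by linarith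
  then show "tt1 j m \<le> 1" using p by (simp add: tt1_def divide_le_eq)
  have "real m - 1 \<le> 2^j" using \<open>real m \<le> 2^j\<close> by linarith
  then show "tt0 j m \<le> 1" using p by (simp add: tt0_def divide_le_eq)
qed

lemma tt_order: "tt0 j m \<le> tt1 j m" "tt1 j m \<le> tt2 j m" "tt0 j m + tt2 j m = 2 * tt1 j m"
  "tt2 j m - tt1 j m = 1 / 2^(j+1)"
  by (auto simp: tt0_def tt1_def tt2_def field_simps)

lemma cell_exists:
  assumes "q < j" "1 \<le> m"
  shows "\<exists>k::int. of_int k \<le> 2^(q+1) * tt0 j m \<and> 2^(q+1) * tt2 j m \<le> of_int k + 1"
proof -
  define d :: nat where "d = 2^(j-q-1)"
  have d0: "d > 0" by (simp add: d_def)
  have jj: "j = (q+1) + (j-q-1)" using assms by simp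
  have jd: "(2::real)^j = 2^(q+1) * real d" unfolding d_def
    by (subst jj) (simp only: power_add of_nat_power of_nat_numeral)
  define k where "k = (m-1) div d"
  have k1: "k * d \<le> m - 1" by (simp add: k_def div_times_less_eq_dividend)
  have mm: "(m-1) mod d < d" using d0 by simp
  have dm: "k * d + (m-1) mod d = m - 1" by (simp add: k_def)
  have kd: "(k+1)*d = k*d + d" by simp
  have k2': "m \<le> (k+1) * d" using mm dm assms(2) kd by arith
  have e0: "2^(q+1) * tt0 j m = (real m - 1) / real d" using d0 by (simp add: tt0_def jd field_simps)
  have e2: "2^(q+1) * tt2 j m = real m / real d" using d0 by (simp add: tt2_def jd field_simps)
  have "real (k * d) \<le> real (m - 1)" using k1 by (simp only: of_nat_le_iff)
  then have r1: "real k * real d \<le> real m - 1" using assms(2) by (simp add: of_nat_diff)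
  have "real m \<le> real ((k+1) * d)" using k2' by (simp only: of_nat_le_iff)
  then have r2: "real m \<le> (real k + 1) * real d" by (simp add: algebra_simps)
  have "of_int (int k) \<le> 2^(q+1) * tt0 j m" unfolding e0 using r1 d0 by (simp add: field_simps)
  moreover have "2^(q+1) * tt2 j m \<le> of_int (int k) + 1" unfolding e2 using r2 d0 by (simp add: field_simps)
  ultimately show ?thesis by blast
qed

lemma sDelta_mid:
  assumes "-1 \<le> q" "q < int j" "1 \<le> m"
  shows "sDelta f q (tt0 j m) + sDelta f q (tt2 j m) = 2 *\<^sub>R sDelta f q (tt1 j m)"
proof (cases "q = -1")
  case True then show ?thesis by (simp add: sDelta_m1 scaleR_2)
next
  case False
  define q' where "q' = nat q"
  have q: "q = int q'" using assms(1) False by (simp add: q'_def)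
  then have qj: "q' < j" using assms by simp
  obtain k where k: "of_int k \<le> 2^(q'+1) * tt0 j m" "2^(q'+1) * tt2 j m \<le> of_int k + 1"
    using cell_exists[OF qj assms(3)] by blast
  have o: "tt0 j m \<le> tt2 j m" using tt_order by (metis order_trans)
  have hm: "hs f q' (2^(q'+1) * tt0 j m) + hs f q' (2^(q'+1) * tt2 j m) = 2 *\<^sub>R hs f q' (2^(q'+1) * tt1 j m)"
  proof -
    have e: "tt1 j m = (tt0 j m + tt2 j m) / 2" using tt_order(3)[of j m] by simp
    have e1: "2^(q'+1) * tt1 j m = (2^(q'+1) * tt0 j m + 2^(q'+1) * tt2 j m) / 2"
      unfolding e by (simp add: field_simps)
    have o2: "2^(q'+1) * tt0 j m \<le> 2^(q'+1) * tt2 j m" using o by simp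
    have "hs f q' (2^(q'+1) * tt0 j m) + hs f q' (2^(q'+1) * tt2 j m) = 2 *\<^sub>R hs f q' ((2^(q'+1) * tt0 j m + 2^(q'+1) * tt2 j m) / 2)"
      by (rule hs_mid[of k]) (use k o2 in linarith)+
    then show ?thesis by (simp only: e1)
  qed
  have l: "(if q' = 0 then tt0 j m else 0) + (if q' = 0 then tt2 j m else 0) = 2 * (if q' = 0 then tt1 j m else 0)"
    using tt_order(3)[of j m] by auto
  show ?thesis unfolding q using assms(3)
    by (simp only: sDelta_nat tt_nonneg mid_comb[OF l hm])
qed

lemma abs_scale: "(0::real) < a \<Longrightarrow> \<bar>a * x - a * z\<bar> = a * \<bar>x - z\<bar>"
  by (simp add: right_diff_distrib[symmetric] abs_mult)

lemma sDelta_lip: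
  fixes k :: int
  assumes "0 \<le> x" "0 \<le> z" "of_int k \<le> 2^(q+1)*x" "2^(q+1)*x \<le> of_int k + 1"
    "of_int k \<le> 2^(q+1)*z" "2^(q+1)*z \<le> of_int k + 1"
    and K: "\<And>m. m \<le> 2^q \<Longrightarrow> norm (scoef f (int q) m) \<le> K"
  shows "norm (sDelta f (int q) x - sDelta f (int q) z) \<le> 2^(q+1) * \<bar>x - z\<bar> * K"
proof -
  have K0: "K \<ge> 0" using order_trans[OF norm_ge_zero K[of 0]] by simp
  have d: "norm ((if q = 0 then x else 0) *\<^sub>R (f 1 - f 0) - (if q = 0 then z else 0) *\<^sub>R (f 1 - f 0)) \<le> \<bar>x - z\<bar> * K"
  proof (cases "q=0")
    case True
    have "norm (f 1 - f 0) \<le> K" using K[of 0] True by (simp add: scoef_def)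
    then show ?thesis using True by (simp add: scaleR_diff_left[symmetric] mult_left_mono)
  next
    case False then show ?thesis using K0 by simp
  qed
  have h: "norm (hs f q (2^(q+1)*x) - hs f q (2^(q+1)*z)) \<le> \<bar>2^(q+1)*x - 2^(q+1)*z\<bar> * K"
    by (rule hs_lip[OF assms(3-6)]) (use K in auto)
  have e: "sDelta f (int q) x - sDelta f (int q) z = ((if q = 0 then x else 0) *\<^sub>R (f 1 - f 0) - (if q = 0 then z else 0) *\<^sub>R (f 1 - f 0))
     + (1/2) *\<^sub>R (hs f q (2^(q+1)*x) - hs f q (2^(q+1)*z))"
    using assms(1,2) by (simp only: sDelta_nat) (simp add: algebra_simps)
  have a: "\<bar>2^(q+1)*x - 2^(q+1)*z\<bar> = 2^(q+1) * \<bar>x - z\<bar>" by (rule abs_scale) simp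
  have h2: "norm ((1/2) *\<^sub>R (hs f q (2^(q+1)*x) - hs f q (2^(q+1)*z))) \<le> 2^q * (\<bar>x - z\<bar> * K)"
  proof -
    have "norm ((1/2) *\<^sub>R (hs f q (2^(q+1)*x) - hs f q (2^(q+1)*z))) = (1/2) * norm (hs f q (2^(q+1)*x) - hs f q (2^(q+1)*z))"
      by simp
    also have "\<dots> \<le> (1/2) * (2^(q+1) * \<bar>x - z\<bar> * K)" using h unfolding a by simp
    also have "\<dots> = 2^q * (\<bar>x - z\<bar> * K)" by simp
    finally show ?thesis .
  qed
  have c0: "0 \<le> \<bar>x - z\<bar> * K" using K0 by simp
  have p1: "(1::real) \<le> 2^q" by simp
  have cq: "\<bar>x - z\<bar> * K \<le> 2^q * (\<bar>x - z\<bar> * K)" using mult_right_mono[OF p1 c0] by simp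
  have e2: "2^(q+1) * \<bar>x - z\<bar> * K = 2^q * (\<bar>x - z\<bar> * K) + 2^q * (\<bar>x - z\<bar> * K)" by simp
  have "norm (sDelta f (int q) x - sDelta f (int q) z) \<le> \<bar>x - z\<bar> * K + 2^q * (\<bar>x - z\<bar> * K)"
    unfolding e using norm_triangle_ineq[of "(if q = 0 then x else 0) *\<^sub>R (f 1 - f 0) - (if q = 0 then z else 0) *\<^sub>R (f 1 - f 0)"
      "(1/2) *\<^sub>R (hs f q (2^(q+1)*x) - hs f q (2^(q+1)*z))"] d h2 by linarith
  then show ?thesis using cq e2 by linarith
qed

lemma sDelta_bnd:
  assumes "0 \<le> t" "t \<le> 1"
    and K: "\<And>m. m \<le> 2^q \<Longrightarrow> norm (scoef f (int q) m) \<le> K"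
  shows "norm (sDelta f (int q) t) \<le> 2 * K"
proof -
  have K0: "K \<ge> 0" using order_trans[OF norm_ge_zero K[of 0]] by simp
  have d: "norm ((if q = 0 then t else 0) *\<^sub>R (f 1 - f 0)) \<le> K"
  proof (cases "q=0")
    case True
    have "norm (f 1 - f 0) \<le> K" using K[of 0] True by (simp add: scoef_def)
    then show ?thesis using True assms(1,2) mult_mono[of t 1 "norm (f 1 - f 0)" K] by simp
  next
    case False then show ?thesis using K0 by simp
  qed
  define k where "k = \<lfloor>2^(q+1)*t\<rfloor>"
  have h: "norm (hs f q (2^(q+1)*t)) \<le> K"
    by (rule hs_bnd[of k]) (use K in \<open>auto simp: k_def\<close>)
  have h2: "norm ((1/2) *\<^sub>R hs f q (2^(q+1)*t)) \<le> (1/2) * K" using h by simp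
  have "norm (sDelta f (int q) t) \<le> K + (1/2) * K"
    unfolding sDelta_nat[OF assms(1)] using norm_triangle_ineq[of "(if q = 0 then t else 0) *\<^sub>R (f 1 - f 0)"
      "(1/2) *\<^sub>R hs f q (2^(q+1)*t)"] d h2 by linarith
  then show ?thesis using K0 by simp
qed

lemma sDelta_grid: "sDelta f (int q) (real i / 2^q) = (if q = 0 then real i else 0) *\<^sub>R (f 1 - f 0)"
proof -
  have e: "2^(q+1) * (real i / 2^q) = 2 * of_int (int i)" by simp
  have nn: "0 \<le> real i / 2^q" by simp
  show ?thesis unfolding sDelta_nat[OF nn] e hs_even by auto
qed

lemma sDelta_odd:
  assumes "1 \<le> m" "m \<le> 2^q"
  shows "sDelta f (int q) (tt1 q m) = (if q = 0 then tt1 q m else 0) *\<^sub>R (f 1 - f 0) + (1/2) *\<^sub>R scoef f (int q) m"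
proof -
  have e: "2^(q+1) * tt1 q m = 2 * real m - 1" by (simp add: tt1_def)
  show ?thesis using assms by (simp only: sDelta_nat[OF tt_nonneg(2)[OF assms(1)]] e hs_odd)
qed

lemma sS_m1: "sS f (-1) t = f 0"
  by (simp add: sS_def sDelta_m1)

lemma sS_step: assumes "-1 \<le> r" shows "sS f (r+1) t = sS f r t + sDelta f (r+1) t"
proof -
  have "{-1..r+1} = insert (r+1) {-1..r}" using assms by auto
  then show ?thesis unfolding sS_def by (simp add: add.commute)
qed

lemma A_Suc: "sS f (int (Suc p) - 1) t = sS f (int p - 1) t + sDelta f (int p) t"
  using sS_step[of "int p - 1" f t] by simp



lemma sS_mid:
  assumes "p \<le> j" "1 \<le> m"
  shows "sS f (int p - 1) (tt0 j m) + sS f (int p - 1) (tt2 j m) = 2 *\<^sub>R sS f (int p - 1) (tt1 j m)"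
  using assms(1)
proof (induction p)
  case 0 then show ?case by (simp add: sS_m1 scaleR_2)
next
  case (Suc p)
  have IH: "sS f (int p - 1) (tt0 j m) + sS f (int p - 1) (tt2 j m) = 2 *\<^sub>R sS f (int p - 1) (tt1 j m)"
    using Suc by simp
  have D: "sDelta f (int p) (tt0 j m) + sDelta f (int p) (tt2 j m) = 2 *\<^sub>R sDelta f (int p) (tt1 j m)"
    by (rule sDelta_mid) (use Suc assms in auto)
  have "sS f (int (Suc p) - 1) (tt0 j m) + sS f (int (Suc p) - 1) (tt2 j m)
     = (sS f (int p - 1) (tt0 j m) + sS f (int p - 1) (tt2 j m)) + (sDelta f (int p) (tt0 j m) + sDelta f (int p) (tt2 j m))"
    by (simp only: A_Suc) (simp add: algebra_simps)
  also have "\<dots> = 2 *\<^sub>R sS f (int (Suc p) - 1) (tt1 j m)"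
    by (simp only: IH D A_Suc scaleR_add_right)
  finally show ?case .
qed

lemma sS_lip:
  assumes "p \<le> j" "1 \<le> m" "m \<le> 2^j"
    and K: "\<And>q m'. m' \<le> 2^q \<Longrightarrow> norm (scoef f (int q) m') \<le> K"
  shows "norm (sS f (int p - 1) (tt2 j m) - sS f (int p - 1) (tt1 j m)) \<le> 2^(p+1) * (1/2^(j+1)) * K"
  using assms(1)
proof (induction p)
  case 0
  have K0: "K \<ge> 0" using order_trans[OF norm_ge_zero K[of 0 0]] by simp
  then show ?case by (simp add: sS_m1)
next
  case (Suc p)
  have IH: "norm (sS f (int p - 1) (tt2 j m) - sS f (int p - 1) (tt1 j m)) \<le> 2^(p+1) * (1/2^(j+1)) * K"
    using Suc by simp
  obtain k where k: "of_int k \<le> 2^(p+1) * tt0 j m" "2^(p+1) * tt2 j m \<le> of_int k + 1"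
    using cell_exists[of p j m] Suc assms by auto
  have "2^(p+1) * tt0 j m \<le> 2^(p+1) * tt1 j m" "2^(p+1) * tt1 j m \<le> 2^(p+1) * tt2 j m"
    using tt_order[of j m] by auto
  then have c: "of_int k \<le> 2^(p+1) * tt2 j m" "2^(p+1) * tt2 j m \<le> of_int k + 1"
      "of_int k \<le> 2^(p+1) * tt1 j m" "2^(p+1) * tt1 j m \<le> of_int k + 1" using k by linarith+
  have t1: "0 \<le> tt1 j m" "0 \<le> tt2 j m" using tt_nonneg assms(2) by auto
  have D: "norm (sDelta f (int p) (tt2 j m) - sDelta f (int p) (tt1 j m)) \<le> 2^(p+1) * \<bar>tt2 j m - tt1 j m\<bar> * K"
    by (rule sDelta_lip[where k=k, OF t1(2) t1(1) c K[of _ p]])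
  have "norm (sS f (int (Suc p) - 1) (tt2 j m) - sS f (int (Suc p) - 1) (tt1 j m))
     = norm ((sS f (int p - 1) (tt2 j m) - sS f (int p - 1) (tt1 j m)) + (sDelta f (int p) (tt2 j m) - sDelta f (int p) (tt1 j m)))"
    by (simp only: A_Suc) (simp add: algebra_simps)
  also have "\<dots> \<le> 2^(p+1) * (1/2^(j+1)) * K + 2^(p+1) * (1/2^(j+1)) * K"
    using norm_triangle_le[OF add_mono[OF IH D]] tt_order(4)[of j m] by simp
  also have "\<dots> = 2^(Suc p+1) * (1/2^(j+1)) * K" by simp
  finally show ?case .
qed

lemma sS_bnd:
  assumes "0 \<le> t" "t \<le> 1"
    and K: "\<And>q m'. m' \<le> 2^q \<Longrightarrow> norm (scoef f (int q) m') \<le> K"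
  shows "norm (sS f (int p - 1) t) \<le> norm (f 0) + 2 * real p * K"
proof (induction p)
  case 0 then show ?case by (simp add: sS_m1)
next
  case (Suc p)
  have "norm (sS f (int (Suc p) - 1) t) \<le> norm (sS f (int p - 1) t) + norm (sDelta f (int p) t)"
    by (simp only: A_Suc norm_triangle_ineq)
  also have "\<dots> \<le> (norm (f 0) + 2 * real p * K) + 2 * K"
    by (rule add_mono[OF Suc sDelta_bnd[OF assms(1,2) K]])
  finally show ?case by (simp add: algebra_simps)
qed

lemma scoef_nat: "1 \<le> m \<Longrightarrow> m \<le> 2^q \<Longrightarrow> scoef f (int q) m = 2 *\<^sub>R f (tt1 q m) - f (tt0 q m) - f (tt2 q m)"
  by (simp add: scoef_def)

lemma sS0: "sS f 0 t = f 0 + sDelta f 0 t"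
  using sS_step[of "-1" f t] by (simp add: sS_m1)

lemma half_solve: "a + c = 2 *\<^sub>R x \<Longrightarrow> x = (1/2) *\<^sub>R (a + c)"
  for a c x :: "'a::real_vector" by simp

lemma half_comb: "(1/2) *\<^sub>R (a + c) + (1/2) *\<^sub>R (2 *\<^sub>R b - a - c) = b"
  for a b c :: "'a::real_vector"
proof -
  have "(1/2) *\<^sub>R (a + c) + (1/2) *\<^sub>R (2 *\<^sub>R b - a - c) = (1/2) *\<^sub>R ((a + c) + (2 *\<^sub>R b - a - c))"
    by (simp only: scaleR_add_right)
  also have "(a + c) + (2 *\<^sub>R b - a - c) = 2 *\<^sub>R b" by simp
  finally show ?thesis by simp
qed

lemma interp:
  assumes "i \<le> 2^(p+1)"
  shows "sS f (int p) (real i / 2^(p+1)) = f (real i / 2^(p+1))"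
  using assms
proof (induction p arbitrary: i)
  case 0
  have hs0: "hs f 0 s = Tf 1 s *\<^sub>R (2 *\<^sub>R f (1/2) - f 0 - f 1)" for s
    by (simp add: hs_def scoef_def tt0_def tt1_def tt2_def)
  have D: "sDelta f 0 t = t *\<^sub>R (f 1 - f 0) + (1/2) *\<^sub>R (Tf 1 (2*t) *\<^sub>R (2 *\<^sub>R f (1/2) - f 0 - f 1))" if "0 \<le> t" for t
    using sDelta_nat[OF that, of f 0] by (simp add: hs0)
  have "i = 0 \<or> i = 1 \<or> i = 2" using 0 by auto
  then show ?case
  proof (elim disjE)
    assume "i = 0" then show ?thesis by (simp add: sS0 D Tf_def)
  next
    have hh: "(1/2) *\<^sub>R a + (1/2) *\<^sub>R a = a" for a :: 'a by (simp add: scaleR_add_left[symmetric])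
    assume "i = 1" then show ?thesis by (simp add: sS0 D Tf_def algebra_simps hh)
  next
    assume "i = 2" then show ?thesis by (simp add: sS0 D Tf_def algebra_simps)
  qed
next
  case (Suc p)
  have step: "sS f (int (Suc p)) t = sS f (int p) t + sDelta f (int (Suc p)) t" for t
    using sS_step[of "int p" f t] by (simp add: add.commute)
  show ?case
  proof (cases "even i")
    case True
    then obtain i' where i: "i = 2 * i'" by blast
    have i': "i' \<le> 2^(p+1)" using Suc.prems i by simp
    have pt: "real i / 2^(Suc p + 1) = real i' / 2^(p+1)" by (simp add: i)
    have "sDelta f (int (Suc p)) (real i' / 2^(Suc p)) = 0" by (simp only: sDelta_grid) simp
    then show ?thesis unfolding pt step using Suc.IH[OF i'] by simp
  next
    case False
    then obtain i' where i: "i = 2 * i' + 1" by (metis oddE)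
    define m where "m = i' + 1"
    have m: "1 \<le> m" "m \<le> 2^(Suc p)" using Suc.prems i by (auto simp: m_def)
    have pt: "real i / 2^(Suc p + 1) = tt1 (Suc p) m" by (simp add: i m_def tt1_def)
    have p0: "tt0 (Suc p) m = real i' / 2^(p+1)" by (simp add: tt0_def m_def)
    have p2: "tt2 (Suc p) m = real (i'+1) / 2^(p+1)" by (simp add: tt2_def m_def)
    have I0: "sS f (int p) (tt0 (Suc p) m) = f (tt0 (Suc p) m)" unfolding p0
      by (rule Suc.IH) (use m in \<open>simp add: m_def\<close>)
    have I2: "sS f (int p) (tt2 (Suc p) m) = f (tt2 (Suc p) m)" unfolding p2
      by (rule Suc.IH) (use m in \<open>simp add: m_def\<close>)
    have M: "sS f (int p) (tt0 (Suc p) m) + sS f (int p) (tt2 (Suc p) m) = 2 *\<^sub>R sS f (int p) (tt1 (Suc p) m)"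
      using sS_mid[of "Suc p" "Suc p" m f] m by simp
    have S1: "sS f (int p) (tt1 (Suc p) m) = (1/2) *\<^sub>R (f (tt0 (Suc p) m) + f (tt2 (Suc p) m))"
      using M unfolding I0 I2 by (rule half_solve)
    have D1: "sDelta f (int (Suc p)) (tt1 (Suc p) m) = (1/2) *\<^sub>R (2 *\<^sub>R f (tt1 (Suc p) m) - f (tt0 (Suc p) m) - f (tt2 (Suc p) m))"
      using sDelta_odd[OF m, of f, unfolded scoef_nat[OF m]] by simp
    show ?thesis unfolding pt step S1 D1 by (rule half_comb)
  qed
qed




lemma bil_id:
  fixes A0 A1 A2 :: "'a::real_normed_vector \<Rightarrow>\<^sub>L 'b::real_normed_vector"
  assumes "A0 + A2 = 2 *\<^sub>R A1"
  shows "2 *\<^sub>R blinfun_apply A1 B1 - blinfun_apply A0 B0 - blinfun_apply A2 B2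
       = blinfun_apply A1 (2 *\<^sub>R B1 - B0 - B2) + blinfun_apply (A2 - A1) (B0 - B2)"
proof -
  have eq: "A0 = 2 *\<^sub>R A1 - A2" using assms by (simp add: eq_diff_eq)
  show ?thesis unfolding eq by (simp add: blinfun.bilinear_simps algebra_simps scaleR_2)
qed

lemma grid_zero:
  assumes "j < p" "1 \<le> m"
  shows "sDelta f (int p) (tt0 j m) = 0 \<and> sDelta f (int p) (tt1 j m) = 0 \<and> sDelta f (int p) (tt2 j m) = 0"
proof -
  define d :: nat where "d = 2^(p-j-1)"
  have pp: "p = (j+1) + (p-j-1)" using assms by simp
  have pd: "(2::real)^p = 2^(j+1) * real d" unfolding d_def
    by (subst pp) (simp only: power_add of_nat_power of_nat_numeral)
  have d0: "real d > 0" by (simp add: d_def)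
  have e0: "tt0 j m = real ((m-1)*(2*d)) / 2^p" using assms(2) d0
    by (simp add: tt0_def pd of_nat_diff field_simps)
  have e1: "tt1 j m = real ((2*m-1)*d) / 2^p" using assms(2) d0
    by (simp add: tt1_def pd of_nat_diff field_simps)
  have e2: "tt2 j m = real (m*(2*d)) / 2^p" using d0
    by (simp add: tt2_def pd field_simps)
  have p0: "p \<noteq> 0" using assms by simp
  show ?thesis unfolding e0 e1 e2 sDelta_grid using p0 by simp
qed

lemma geo_bound:
  fixes x :: real assumes "1 < x"
  shows "(\<Sum>p<j. x^p) \<le> x^j / (x - 1)"
proof -
  have "(\<Sum>p<j. x^p) = (x^j - 1) / (x - 1)" using assms by (simp add: geometric_sum)
  also have "\<dots> \<le> x^j / (x - 1)" using assms by (simp add: divide_right_mono)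
  finally show ?thesis .
qed

lemma para_coef:
  fixes v :: "real \<Rightarrow> ('a::real_normed_vector \<Rightarrow>\<^sub>L 'b::real_normed_vector)" and w :: "real \<Rightarrow> 'a"
  assumes summ: "\<And>t. 0 \<le> t \<Longrightarrow> t \<le> 1 \<Longrightarrow> summable (\<lambda>p. para_term v w p t)"
    and V: "\<And>t. 0 \<le> t \<Longrightarrow> t \<le> 1 \<Longrightarrow> norm (v t) \<le> V"
    and Kv: "\<And>q m. m \<le> 2^q \<Longrightarrow> norm (scoef v (int q) m) \<le> 4*V"
    and Kw: "\<And>q m. m \<le> 2^q \<Longrightarrow> norm (scoef w (int q) m) \<le> W / b^q"
    and b: "1 < b" "b < 4"
    and m: "1 \<le> m" "m \<le> 2^j"
  shows "b^j * norm (scoef (para v w) (int j) m) \<le> (1 + 8 / (4/b - 1)) * V * W"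
proof -
  have V0: "0 \<le> V" using order_trans[OF norm_ge_zero V[of 0]] by simp
  have W0: "0 \<le> W" using order_trans[OF norm_ge_zero Kw[of 0 0]] by simp
  have b0: "b > 0" using b by simp
  define T where "T p t = para_term v w p t" for p t
  define c where "c p = 2 *\<^sub>R T p (tt1 j m) - T p (tt0 j m) - T p (tt2 j m)" for p
  have t01: "0 \<le> tt0 j m" "tt0 j m \<le> 1" "0 \<le> tt1 j m" "tt1 j m \<le> 1" "0 \<le> tt2 j m" "tt2 j m \<le> 1"
    using tt_nonneg tt_le1 m by auto
  have sums: "(\<lambda>p. T p t) sums para v w t" if "0 \<le> t" "t \<le> 1" for t
    unfolding T_def para_def using summ[OF that] by (simp add: summable_sums)
  have csum: "c sums (2 *\<^sub>R para v w (tt1 j m) - para v w (tt0 j m) - para v w (tt2 j m))"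
    unfolding c_def by (intro sums_diff sums_scaleR_right sums) (use t01 in auto)
  have sc: "scoef (para v w) (int j) m = 2 *\<^sub>R para v w (tt1 j m) - para v w (tt0 j m) - para v w (tt2 j m)"
    using m by (simp add: scoef_nat)
  have cz: "c p = 0" if "p \<notin> {..j}" for p
  proof -
    have "j < p" using that by simp
    from grid_zero[OF this m(1), of w] show ?thesis by (simp add: c_def T_def para_term_def)
  qed
  have "scoef (para v w) (int j) m = suminf c" unfolding sc using csum by (simp add: sums_unique)
  also have "\<dots> = sum c {..j}" by (rule suminf_finite) (use cz in auto)
  also have "\<dots> = sum c {..<j} + c j" by (simp add: lessThan_Suc_atMost[symmetric])
  finally have scs: "scoef (para v w) (int j) m = sum c {..<j} + c j" .
  have cp: "norm (c p) \<le> 8 * V * W / 4^j * (4/b)^p" if pj: "p < j" for p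
  proof -
    define A where "A t = sS v (int p - 1) t" for t
    define B where "B t = sDelta w (int p) t" for t
    have Am: "A (tt0 j m) + A (tt2 j m) = 2 *\<^sub>R A (tt1 j m)"
      unfolding A_def by (rule sS_mid) (use pj m in auto)
    have Bm: "B (tt0 j m) + B (tt2 j m) = 2 *\<^sub>R B (tt1 j m)"
      unfolding B_def by (rule sDelta_mid) (use pj m in auto)
    have "c p = blinfun_apply (A (tt1 j m)) (2 *\<^sub>R B (tt1 j m) - B (tt0 j m) - B (tt2 j m))
        + blinfun_apply (A (tt2 j m) - A (tt1 j m)) (B (tt0 j m) - B (tt2 j m))"
      unfolding c_def T_def para_term_def A_def[symmetric] B_def[symmetric] by (rule bil_id[OF Am])
    also have "2 *\<^sub>R B (tt1 j m) - B (tt0 j m) - B (tt2 j m) = 0" using Bm by (simp add: algebra_simps)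
    also have "B (tt0 j m) - B (tt2 j m) = 2 *\<^sub>R (B (tt1 j m) - B (tt2 j m))"
      using Bm by (simp add: algebra_simps scaleR_2)
    finally have ce: "c p = blinfun_apply (A (tt2 j m) - A (tt1 j m)) (2 *\<^sub>R (B (tt1 j m) - B (tt2 j m)))"
      by simp
    have nA: "norm (A (tt2 j m) - A (tt1 j m)) \<le> 2^(p+1) * (1/2^(j+1)) * (4*V)"
      unfolding A_def by (rule sS_lip) (use pj m Kv in auto)
    obtain k where k: "of_int k \<le> 2^(p+1) * tt0 j m" "2^(p+1) * tt2 j m \<le> of_int k + 1"
      using cell_exists[OF pj m(1)] by auto
    have "2^(p+1) * tt0 j m \<le> 2^(p+1) * tt1 j m" "2^(p+1) * tt1 j m \<le> 2^(p+1) * tt2 j m"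
      using tt_order[of j m] by auto
    then have cc: "of_int k \<le> 2^(p+1) * tt2 j m" "2^(p+1) * tt2 j m \<le> of_int k + 1"
      "of_int k \<le> 2^(p+1) * tt1 j m" "2^(p+1) * tt1 j m \<le> of_int k + 1" using k by linarith+
    have nB: "norm (B (tt2 j m) - B (tt1 j m)) \<le> 2^(p+1) * \<bar>tt2 j m - tt1 j m\<bar> * (W / b^p)"
      unfolding B_def by (rule sDelta_lip[where k=k, OF t01(5) t01(3) cc Kw[of _ p]])
    have nB': "norm (2 *\<^sub>R (B (tt1 j m) - B (tt2 j m))) \<le> 2 * (2^(p+1) * (1/2^(j+1)) * (W / b^p))"
      using nB tt_order(4)[of j m] by (simp add: norm_minus_commute)
    have "norm (c p) \<le> norm (A (tt2 j m) - A (tt1 j m)) * norm (2 *\<^sub>R (B (tt1 j m) - B (tt2 j m)))"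
      unfolding ce by (rule norm_blinfun)
    also have "\<dots> \<le> (2^(p+1) * (1/2^(j+1)) * (4*V)) * (2 * (2^(p+1) * (1/2^(j+1)) * (W / b^p)))"
      by (rule mult_mono[OF nA nB']) (use V0 W0 b0 in auto)
    also have "\<dots> = 8 * V * W / 4^j * (4/b)^p"
    proof -
      have f4: "(4::real)^n = 2^n * 2^n" for n by (simp add: power_mult_distrib[symmetric])
      show ?thesis using b0 by (simp add: f4 power_divide field_simps)
    qed
    finally show ?thesis .
  qed
  have cs: "norm (sum c {..<j}) \<le> 8 * V * W / 4^j * ((4/b)^j / (4/b - 1))"
  proof -
    have "norm (sum c {..<j}) \<le> (\<Sum>p<j. 8 * V * W / 4^j * (4/b)^p)"
      by (rule order_trans[OF norm_sum sum_mono]) (use cp in auto)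
    also have "\<dots> = 8 * V * W / 4^j * (\<Sum>p<j. (4/b)^p)" by (simp add: sum_distrib_left)
    also have "\<dots> \<le> 8 * V * W / 4^j * ((4/b)^j / (4/b - 1))"
      by (rule mult_left_mono[OF geo_bound]) (use b V0 W0 in auto)
    finally show ?thesis .
  qed
  have cj: "norm (c j) \<le> V * (W / b^j)"
  proof -
    define A where "A t = sS v (int j - 1) t" for t
    define B where "B t = sDelta w (int j) t" for t
    have Am: "A (tt0 j m) + A (tt2 j m) = 2 *\<^sub>R A (tt1 j m)"
      unfolding A_def by (rule sS_mid) (use m in auto)
    have ce: "c j = blinfun_apply (A (tt1 j m)) (2 *\<^sub>R B (tt1 j m) - B (tt0 j m) - B (tt2 j m))
        + blinfun_apply (A (tt2 j m) - A (tt1 j m)) (B (tt0 j m) - B (tt2 j m))"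
      unfolding c_def T_def para_term_def A_def[symmetric] B_def[symmetric] by (rule bil_id[OF Am])
    have e0: "2^(j+1) * tt0 j m = 2 * of_int (int m - 1)" using m by (simp add: tt0_def of_nat_diff)
    have e2: "2^(j+1) * tt2 j m = 2 * of_int (int m)" by (simp add: tt2_def)
    have B0: "B (tt0 j m) = (if j = 0 then tt0 j m else 0) *\<^sub>R (w 1 - w 0)"
      unfolding B_def sDelta_nat[OF t01(1)] e0 hs_even by simp
    have B2: "B (tt2 j m) = (if j = 0 then tt2 j m else 0) *\<^sub>R (w 1 - w 0)"
      unfolding B_def sDelta_nat[OF t01(5)] e2 hs_even by simp
    have B1: "B (tt1 j m) = (if j = 0 then tt1 j m else 0) *\<^sub>R (w 1 - w 0) + (1/2) *\<^sub>R scoef w (int j) m"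
      unfolding B_def by (rule sDelta_odd[OF m])
    have D2: "2 *\<^sub>R B (tt1 j m) - B (tt0 j m) - B (tt2 j m) = scoef w (int j) m"
    proof -
      have "2 *\<^sub>R B (tt1 j m) - B (tt0 j m) - B (tt2 j m) =
         (2 * (if j = 0 then tt1 j m else 0) - (if j = 0 then tt0 j m else 0) - (if j = 0 then tt2 j m else 0)) *\<^sub>R (w 1 - w 0)
          + scoef w (int j) m"
        unfolding B0 B1 B2 by (simp add: algebra_simps)
      also have "(2 * (if j = 0 then tt1 j m else 0) - (if j = 0 then tt0 j m else 0) - (if j = 0 then tt2 j m else 0)) = 0"
        using tt_order(3)[of j m] by auto
      finally show ?thesis by simp
    qed
    have Z: "blinfun_apply (A (tt2 j m) - A (tt1 j m)) (B (tt0 j m) - B (tt2 j m)) = 0"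
    proof (cases "j = 0")
      case True
      then have "A (tt2 j m) = A (tt1 j m)" by (simp add: A_def sS_m1)
      then show ?thesis by simp
    next
      case False
      then have "B (tt0 j m) - B (tt2 j m) = 0" by (simp add: B0 B2)
      then show ?thesis by simp
    qed
    have nA: "norm (A (tt1 j m)) \<le> V"
    proof (cases "j = 0")
      case True
      then have "A (tt1 j m) = v 0" by (simp add: A_def sS_m1)
      then show ?thesis using V[of 0] by simp
    next
      case False
      then obtain j' where j: "j = Suc j'" by (cases j) auto
      have Aj: "A t = sS v (int j') t" for t by (simp add: A_def j)
      have i0: "tt0 j m = real (m-1) / 2^(j'+1)" using m by (simp add: tt0_def j of_nat_diff)
      have i2: "tt2 j m = real m / 2^(j'+1)" by (simp add: tt2_def j)
      have A0: "A (tt0 j m) = v (tt0 j m)" unfolding Aj i0 by (rule interp) (use m j in auto)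
      have A2: "A (tt2 j m) = v (tt2 j m)" unfolding Aj i2 by (rule interp) (use m j in auto)
      have "A (tt1 j m) = (1/2) *\<^sub>R (v (tt0 j m) + v (tt2 j m))"
        using Am unfolding A0 A2 by (simp add: algebra_simps)
      then have "norm (A (tt1 j m)) \<le> (1/2) * (norm (v (tt0 j m)) + norm (v (tt2 j m)))"
        using norm_triangle_ineq[of "v (tt0 j m)" "v (tt2 j m)"] by simp
      also have "\<dots> \<le> (1/2) * (V + V)" using V t01 by (intro mult_left_mono add_mono) auto
      finally show ?thesis by simp
    qed
    have "norm (c j) \<le> norm (A (tt1 j m)) * norm (scoef w (int j) m)"
      unfolding ce D2 Z using norm_blinfun by simp
    also have "\<dots> \<le> V * (W / b^j)" by (rule mult_mono[OF nA Kw]) (use m V0 in auto)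
    finally show ?thesis .
  qed
  have "norm (scoef (para v w) (int j) m) \<le> 8 * V * W / 4^j * ((4/b)^j / (4/b - 1)) + V * (W / b^j)"
    unfolding scs using norm_triangle_le[OF add_mono[OF cs cj]] by simp
  then have "b^j * norm (scoef (para v w) (int j) m) \<le> b^j * (8 * V * W / 4^j * ((4/b)^j / (4/b - 1)) + V * (W / b^j))"
    using b0 by (simp add: mult_left_mono)
  also have "\<dots> = (1 + 8 / (4/b - 1)) * V * W"
  proof -
    define d where "d = 4/b - 1"
    have d0: "d > 0" using b by (simp add: d_def field_simps)
    have pj: "(4/b)^j = 4^j / b^j" by (simp add: power_divide)
    have q1: "b^j * (8 * V * W / 4^j * ((4/b)^j / d)) = 8 * V * W / d"
      unfolding pj using b0 d0 by (simp add: field_simps)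
    have q2: "b^j * (V * (W / b^j)) = V * W" using b0 by (simp add: field_simps)
    have "b^j * (8 * V * W / 4^j * ((4/b)^j / d) + V * (W / b^j)) = 8 * V * W / d + V * W"
      unfolding distrib_left q1 q2 ..
    also have "\<dots> = (1 + 8 / d) * V * W" by (simp add: algebra_simps)
    finally show ?thesis unfolding d_def .
  qed
  finally show ?thesis .
qed


lemma schauder_cont:
  assumes "-1 \<le> q"
  shows "continuous_on {0..1} (schauder q m)"
proof (cases "q = -1")
  case True
  then have "schauder q m = (\<lambda>_. 1)" by (simp add: fun_eq_iff schauder_def)
  then show ?thesis by simp
next
  case False
  define q' where "q' = nat q"
  have q: "q = int q'" using assms False by (simp add: q'_def)
  consider "m = 0" "q' = 0" | "m = 0" "q' > 0" | "1 \<le> m" "m \<le> 2^q'" | "2^q' < m" by linarith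
  then show ?thesis
  proof cases
    case 1
    show ?thesis
      by (rule continuous_on_cong[THEN iffD1, OF refl _ continuous_on_id]) (use 1 in \<open>simp add: q schauder_00\<close>)
  next
    case 2
    then have "schauder q m = (\<lambda>_. 0)" by (simp add: fun_eq_iff q schauder_q0)
    then show ?thesis by simp
  next
    case 3
    have c: "continuous_on {0..1} (\<lambda>t. Tf (2*real m - 1) (2^(q'+1)*t) / 2)"
      unfolding Tf_def by (intro continuous_intros) auto
    show ?thesis
      by (rule continuous_on_cong[THEN iffD1, OF refl _ c]) (use 3 in \<open>simp add: q schauder_hat\<close>)
  next
    case 4
    then have "schauder q m = (\<lambda>_. 0)" by (simp add: fun_eq_iff q schauder_big)
    then show ?thesis by simp
  qed
qed

lemma sDelta_cont: "-1 \<le> q \<Longrightarrow> continuous_on {0..1} (sDelta f q)"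
  unfolding sDelta_def by (intro continuous_intros schauder_cont)

lemma sS_cont: "continuous_on {0..1} (sS f r)"
  unfolding sS_def by (intro continuous_on_sum sDelta_cont) auto

lemma term_cont: "continuous_on {0..1} (para_term v w p)"
proof -
  have "continuous_on {0..1} (\<lambda>t. blinfun_apply (sS v (int p - 1) t) (sDelta w (int p) t))"
    by (rule blinfun.continuous_on[OF sS_cont sDelta_cont]) simp
  then show ?thesis by (simp add: para_term_def[abs_def])
qed

lemma norm3: "norm (2 *\<^sub>R a - b - c) \<le> 2 * norm a + norm b + norm c"
  for a b c :: "'a::real_normed_vector"
proof -
  have "norm (2 *\<^sub>R a - b - c) \<le> norm (2 *\<^sub>R a - b) + norm c" by (rule norm_triangle_ineq4)
  also have "norm (2 *\<^sub>R a - b) \<le> norm (2 *\<^sub>R a) + norm b" by (rule norm_triangle_ineq4)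
  finally show ?thesis by simp
qed

lemma para0: "para v w 0 = 0"
proof -
  have "sDelta w (int p) 0 = 0" for p using sDelta_grid[of w p 0] by simp
  then show ?thesis by (simp add: para_def para_term_def)
qed

lemma para1: "para v w 1 = blinfun_apply (v 0) (w 1 - w 0)"
proof -
  have d: "sDelta w (int p) 1 = (if p = 0 then w 1 - w 0 else 0)" for p
    using sDelta_grid[of w p "2^p"] by simp
  have t: "para_term v w p 1 = (if p = 0 then blinfun_apply (v 0) (w 1 - w 0) else 0)" for p
    by (simp add: para_term_def d sS_m1)
  have "para v w 1 = (\<Sum>p\<in>{0}. para_term v w p 1)"
    unfolding para_def by (rule suminf_finite) (auto simp: t)
  then show ?thesis by (simp add: t)
qed



theorem mainTheorem2:
  fixes \<beta> :: real
  assumes "0 < \<beta>" and "\<beta> < 2"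
  shows "\<exists>C>0. \<forall>(v :: real \<Rightarrow> ((real^'d) \<Rightarrow>\<^sub>L (real^'n))) (w :: real \<Rightarrow> (real^'d)).
           continuous_on {0..1} v \<and> w \<in> holder_space \<beta> \<longrightarrow>
             uniform_limit {0..1} (\<lambda>N t. \<Sum>p<N. para_term v w p t) (para v w) sequentially \<and>
             para v w \<in> holder_space \<beta> \<and>
             holder_norm \<beta> (para v w) \<le> C * sup_norm v * holder_norm \<beta> w"
proof -
  define b where "b = 2 powr \<beta>"
  have b1: "1 < b" unfolding b_def using powr_less_mono[of 0 \<beta> 2] assms by simp
  have b4: "b < 4" unfolding b_def using powr_less_mono[of \<beta> 2 2] assms by simp
  have b0: "0 < b" using b1 by simp
  define C where "C = 1 + 8 / (4/b - 1)"
  have d0: "4/b - 1 > 0" using b4 b0 by (simp add: field_simps)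
  have C1: "1 \<le> C" unfolding C_def using d0 by simp
  have pw: "2 powr (real q * \<beta>) = b^q" for q :: nat
    unfolding b_def by (simp add: powr_power mult.commute)
  show ?thesis
  proof (intro exI[of _ C] conjI allI impI)
    show "0 < C" using C1 by simp
    fix v :: "real \<Rightarrow> ((real^'d) \<Rightarrow>\<^sub>L (real^'n))" and w :: "real \<Rightarrow> (real^'d)"
    assume vw: "continuous_on {0..1} v \<and> w \<in> holder_space \<beta>"
    define V where "V = sup_norm v"
    define W where "W = holder_norm \<beta> w"
    have "compact ((\<lambda>t. norm (v t)) ` {0..1})"
      by (intro compact_continuous_image continuous_intros) (use vw in auto)
    then have bddv: "bdd_above ((\<lambda>t. norm (v t)) ` {0..1})"
      by (intro bounded_imp_bdd_above compact_imp_bounded)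
    have Vb: "norm (v t) \<le> V" if "0 \<le> t" "t \<le> 1" for t
      unfolding V_def sup_norm_def by (rule cSUP_upper[OF _ bddv]) (use that in auto)
    have V0: "0 \<le> V" using order_trans[OF norm_ge_zero Vb[of 0]] by simp
    have Kv: "norm (scoef v (int q) m) \<le> 4*V" if "m \<le> 2^q" for q m
    proof (cases "m = 0")
      case True
      show ?thesis
      proof (cases "q = 0")
        case True
        have "norm (v 1 - v 0) \<le> norm (v 1) + norm (v 0)" by (rule norm_triangle_ineq4)
        then show ?thesis using Vb[of 1] Vb[of 0] V0 \<open>m = 0\<close> True by (simp add: scoef_def)
      next
        case False then show ?thesis using V0 \<open>m = 0\<close> by (simp add: scoef_def)
      qed
    next
      case False
      then have m: "1 \<le> m" "m \<le> 2^q" using that by auto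
      have t: "0 \<le> tt0 q m" "tt0 q m \<le> 1" "0 \<le> tt1 q m" "tt1 q m \<le> 1" "0 \<le> tt2 q m" "tt2 q m \<le> 1"
        using tt_nonneg tt_le1 m by auto
      show ?thesis unfolding scoef_nat[OF m]
        using norm3[of "v (tt1 q m)" "v (tt0 q m)" "v (tt2 q m)"] Vb[OF t(3,4)] Vb[OF t(1,2)] Vb[OF t(5,6)] by linarith
    qed
    have bddw: "bdd_above ((\<lambda>pm. 2 powr (real_of_int (fst pm) * \<beta>) * norm (scoef w (fst pm) (snd pm))) ` schauder_idx)"
      using vw by (simp add: holder_space_def)
    have Kw: "norm (scoef w (int q) m) \<le> W / b^q" if "m \<le> 2^q" for q m
    proof -
      have "(int q, m) \<in> schauder_idx" using that by (auto simp: schauder_idx_def)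
      from cSUP_upper[OF this bddw] have "b^q * norm (scoef w (int q) m) \<le> W"
        by (simp add: W_def holder_norm_def pw)
      then show ?thesis using b0 by (simp add: field_simps)
    qed
    have W0: "0 \<le> W" using order_trans[OF norm_ge_zero Kw[of 0 0]] by simp
    define M where "M p = 16 * V * W * (real (Suc p) * (1/b)^p)" for p
    have tb: "norm (para_term v w p t) \<le> M p" if "t \<in> {0..1}" for p t
    proof -
      have t: "0 \<le> t" "t \<le> 1" using that by auto
      have nS: "norm (sS v (int p - 1) t) \<le> V + 2 * real p * (4 * V)"
        using sS_bnd[OF t Kv, of p] Vb[of 0] by simp
      have nD: "norm (sDelta w (int p) t) \<le> 2 * (W / b^p)"
        by (rule sDelta_bnd[OF t Kw])
      have X0: "0 \<le> V * (W / b^p)" using V0 W0 b0 by simp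
      have "norm (para_term v w p t) \<le> norm (sS v (int p - 1) t) * norm (sDelta w (int p) t)"
        unfolding para_term_def by (rule norm_blinfun)
      also have "\<dots> \<le> (V + 2 * real p * (4 * V)) * (2 * (W / b^p))"
        by (rule mult_mono[OF nS nD]) (use V0 W0 b0 in auto)
      also have "\<dots> = (2 + 16 * real p) * (V * (W / b^p))" by (simp add: algebra_simps)
      also have "\<dots> \<le> (16 * real (Suc p)) * (V * (W / b^p))"
        by (rule mult_right_mono[OF _ X0]) simp
      also have "\<dots> = M p" by (simp add: M_def power_one_over)
      finally show ?thesis .
    qed
    have "summable (\<lambda>n. diffs (\<lambda>n. 1::real) n * (1/b)^n)"
      by (rule termdiff_converges[of "1/b" 1]) (use b1 in auto)
    then have "summable (\<lambda>n. real (Suc n) * (1/b)^n)" by (simp add: diffs_def)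
    then have sM: "summable M" unfolding M_def by (rule summable_mult)
    have pe: "para v w = (\<lambda>t. \<Sum>i. para_term v w i t)" by (simp add: fun_eq_iff para_def)
    have ul: "uniform_limit {0..1} (\<lambda>N t. \<Sum>p<N. para_term v w p t) (para v w) sequentially"
      unfolding pe by (rule Weierstrass_m_test[OF tb sM])
    have summ: "summable (\<lambda>p. para_term v w p t)" if "0 \<le> t" "t \<le> 1" for t
      by (rule summable_comparison_test'[OF sM]) (use tb that in auto)
    have cont: "continuous_on {0..1} (para v w)"
      by (rule uniform_limit_theorem[OF _ ul]) (auto intro!: always_eventually continuous_on_sum term_cont)
    have bound: "2 powr (real_of_int (fst pm) * \<beta>) * norm (scoef (para v w) (fst pm) (snd pm)) \<le> C * V * W"
      if "pm \<in> schauder_idx" for pm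
    proof -
      have CVW: "0 \<le> C * V * W" using C1 V0 W0 by simp
      from that consider "pm = (-1, 0)" | p m where "pm = (int p, m)" "m \<le> 2^p"
        unfolding schauder_idx_def by auto
      then show ?thesis
      proof cases
        case 1
        then show ?thesis using CVW by (simp add: scoef_def para0)
      next
        case (2 p m)
        show ?thesis
        proof (cases "m = 0")
          case True
          show ?thesis
          proof (cases "p = 0")
            case True
            have "norm (blinfun_apply (v 0) (w 1 - w 0)) \<le> norm (v 0) * norm (w 1 - w 0)" by (rule norm_blinfun)
            also have "\<dots> \<le> V * W"
              using mult_mono[OF Vb[of 0] Kw[of 0 0]] V0 by (simp add: scoef_def)
            also have "\<dots> \<le> C * V * W" using C1 V0 W0 mult_right_mono[OF C1, of "V*W"] by simp
            finally show ?thesis using 2 \<open>m = 0\<close> True by (simp add: scoef_def para0 para1)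
          next
            case False
            then show ?thesis using 2 \<open>m = 0\<close> CVW by (simp add: scoef_def)
          qed
        next
          case False
          then have m: "1 \<le> m" "m \<le> 2^p" using 2 by auto
          have "b^p * norm (scoef (para v w) (int p) m) \<le> C * V * W"
            unfolding C_def by (rule para_coef[OF summ Vb Kv Kw b1 b4 m]) auto
          then show ?thesis using 2 by (simp add: pw)
        qed
      qed
    qed
    show "uniform_limit {0..1} (\<lambda>N t. \<Sum>p<N. para_term v w p t) (para v w) sequentially" by (rule ul)
    show "para v w \<in> holder_space \<beta>"
      unfolding holder_space_def using cont bound by (auto intro!: bdd_aboveI2)
    have ne: "schauder_idx \<noteq> {}" by (auto simp: schauder_idx_def)
    show "holder_norm \<beta> (para v w) \<le> C * sup_norm v * holder_norm \<beta> w"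
      unfolding holder_norm_def[of \<beta> "para v w"] V_def[symmetric] W_def[symmetric]
      by (rule cSUP_least[OF ne bound])
  qed
qed


end
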